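(* Let $\mathcal{Z}$ be a sample space, $\mathcal{H}$ a set of hypotheses, $n\in\mathbb{N}$, $\mathcal{D}$ a distribution on $\mathcal{Z}$, $S\sim\mathcal{D}^n$, and let $\mathcal{A}$ be a learning algorithm given by a Markov kernel $\mathcal{P}_{H|S}$, $H=\mathcal{A}(S)$, with $\mathcal{P}_{SH}\ll\mathcal{P}_S\mathcal{P}_H$. Let $\ell:\mathcal{H}\times\mathcal{Z}\to\mathbb{R}$ be a loss function and $\sigma>0$ such that for every $h\in\mathcal{H}$ and every $\eta>0$, $$\mathbb{P}_{S\sim\mathcal{D}^n}\left(|L_S(h)-L_{\mathcal{D}}(h)|>\eta\right)\le2\exp\left(-\frac{\eta^2}{2\sigma^2}n\right)$$ (e.g. if $\ell(h,Z)-\mathbb{E}\ell(h,Z)$ is $\sigma^2$-sub-Gaussian for every $h$). Let $\alpha>1$ and $\gamma=\frac{\alpha}{\alpha-1}$. Then $$\mathbb{E}\left[|L_S(H)-L_{\mathcal{D}}(H)|\right]\le\sqrt{\frac{2\sigma^2\gamma}{n}}\left(\sqrt{\frac{\log2+I_\alpha(S;\mathcal{A}(S))}{\gamma}}+\frac{1}{2\sqrt{\frac{\log2+I_\alpha(S;\mathcal{A}(S))}{\gamma}}}\right).$$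
   Context: $L_{\mathcal{D}}(h)=\mathbb{E}_{Z\sim\mathcal{D}}[\ell(h,Z)]$ (the expected loss of $h$), and for $s=(z_1,\dots,z_n)$, $L_s(h)=\frac1n\sum_{i=1}^n\ell(h,z_i)$. A real random variable $W$ is $\sigma^2$-sub-Gaussian if $\mathbb{E}[e^{\lambda W}]\le e^{\lambda^2\sigma^2/2}$ for all $\lambda$. Sibson's $\alpha$-mutual information is $I_\alpha(S;H)=\min_{Q_H}D_\alpha(\mathcal{P}_{SH}\|\mathcal{P}_SQ_H)$ with $D_\alpha(\mathcal{P}\|\mathcal{Q})=\frac{1}{\alpha-1}\ln\int p^\alpha q^{1-\alpha}d\mu$ the Rényi divergence. Logarithms are natural. *)

theory Defs
  imports "HOL-Probability.Probability"
begin

text \<open>If P is not absolutely continuous w.r.t. Q the divergence is +infinity (alpha > 1);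
  otherwise int p^alpha q^(1-alpha) dmu = int (dP/dQ)^alpha dQ.\<close>
definition renyi_div :: "real \<Rightarrow> 'a measure \<Rightarrow> 'a measure \<Rightarrow> ereal" where
  "renyi_div \<alpha> P Q =
     (if sets P = sets Q \<and> absolutely_continuous Q P then
        (let I = (\<integral>\<^sup>+ x. ennreal (enn2real (RN_deriv Q P x) powr \<alpha>) \<partial>Q)
         in if I = \<top> then \<infinity> else ereal (ln (enn2real I) / (\<alpha> - 1)))
      else \<infinity>)"

definition sibson_mi :: "real \<Rightarrow> ('s \<times> 'h) measure \<Rightarrow> 's measure \<Rightarrow> 'h measure \<Rightarrow> ereal" where
  "sibson_mi \<alpha> PSH PS H =
     (INF Q \<in> {Q. prob_space Q \<and> sets Q = sets H}. renyi_div \<alpha> PSH (PS \<Otimes>\<^sub>M Q))"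

end

theory Submission
  imports Defs "HOL-Real_Asymp.Real_Asymp"
begin


lemma young_step:
  fixes G u v A mE \<alpha> :: real
  assumes \<alpha>: "\<alpha> > 1" and G: "G \<ge> 0" and A: "A > 0" and mE: "mE > 0"
    and u: "u = A powr (1/\<alpha>)" and v: "v = mE powr ((\<alpha>-1)/\<alpha>)"
  shows "G \<le> u * v / (\<alpha> * A) * G powr \<alpha> + u * v / ((\<alpha>/(\<alpha>-1))*mE)"
proof -
  define q where "q = \<alpha>/(\<alpha>-1)"
  have q: "q > 1" using \<alpha> by (simp add: q_def field_simps)
  have pq: "1/\<alpha> + 1/q = 1" using \<alpha> by (simp add: q_def field_simps)
  have upos: "u > 0" and vpos: "v > 0" using u v A mE by auto
  have Y: "(G/u) * (1/v) \<le> (G/u) powr \<alpha> / \<alpha> + (1/v) powr q / q"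
    by (rule Youngs_inequality) (use \<alpha> q pq G upos vpos in auto)
  have e1: "(G/u) powr \<alpha> = G powr \<alpha> / A"
    using G upos A \<alpha> by (simp add: powr_divide u powr_powr)
  have e2: "(1/v) powr q = 1 / mE"
    using vpos mE \<alpha> by (simp add: powr_divide v powr_powr q_def)
  have "G = u * v * ((G/u) * (1/v))" using upos vpos by simp
  also have "\<dots> \<le> u * v * ((G/u) powr \<alpha> / \<alpha> + (1/v) powr q / q)"
    using Y upos vpos by (intro mult_left_mono) auto
  also have "\<dots> = u * v / (\<alpha> * A) * G powr \<alpha> + u * v / (q*mE)"
    unfolding e1 e2 using A mE by (simp add: field_simps)
  finally show ?thesis by (simp add: q_def)
qed

lemma holder_core:
  fixes M :: "'a measure" and P and \<alpha> :: real
  assumes M: "prob_space M" and P: "prob_space P" and sets: "sets P = sets M"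
    and ac: "absolutely_continuous M P" and \<alpha>: "\<alpha> > 1"
    and Afin: "(\<integral>\<^sup>+ x. ennreal (enn2real (RN_deriv M P x) powr \<alpha>) \<partial>M) \<noteq> \<top>"
    and E: "E \<in> sets M"
  shows "emeasure P E \<le> ennreal (enn2real (\<integral>\<^sup>+ x. ennreal (enn2real (RN_deriv M P x) powr \<alpha>) \<partial>M) powr (1/\<alpha>)
            * measure M E powr ((\<alpha>-1)/\<alpha>))"
proof -
  interpret M: prob_space M by fact
  interpret P: prob_space P by fact
  define g where "g = RN_deriv M P"
  define G where "G x = enn2real (g x)" for x
  define Aen where "Aen = (\<integral>\<^sup>+ x. ennreal (G x powr \<alpha>) \<partial>M)"
  define A where "A = enn2real Aen"
  define mE where "mE = measure M E"
  have gm[measurable]: "g \<in> borel_measurable M" unfolding g_def by simp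
  have Gm[measurable]: "G \<in> borel_measurable M" unfolding G_def by simp
  have dens: "density M g = P" unfolding g_def using M.density_RN_deriv[OF ac sets] .
  have fin: "AE x in M. g x \<noteq> \<infinity>" unfolding g_def
    by (rule M.RN_deriv_finite[OF _ ac sets]) (rule P.sigma_finite_measure_axioms)
  have PE: "emeasure P F = (\<integral>\<^sup>+ x. ennreal (G x) * indicator F x \<partial>M)" if F: "F \<in> sets M" for F
  proof -
    have "emeasure P F = emeasure (density M g) F" using dens by simp
    also have "\<dots> = (\<integral>\<^sup>+ x. g x * indicator F x \<partial>M)" using F by (simp add: emeasure_density)
    also have "\<dots> = (\<integral>\<^sup>+ x. ennreal (G x) * indicator F x \<partial>M)"
      by (rule nn_integral_cong_AE) (use fin in \<open>auto simp: G_def ennreal_enn2real_if\<close>)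
    finally show ?thesis .
  qed
  have Aen_eq: "Aen = ennreal A" unfolding A_def using Afin by (simp add: Aen_def G_def g_def ennreal_enn2real_if)
  show ?thesis
  proof (cases "mE = 0")
    case True
    then have "E \<in> null_sets M" using E by (simp add: mE_def M.emeasure_eq_measure null_sets_def)
    then have "E \<in> null_sets P" using ac unfolding absolutely_continuous_def by blast
    then have "emeasure P E = 0" by (simp add: null_sets_def)
    then show ?thesis by simp
  next
    case mE0: False
    have mEpos: "mE > 0" using mE0 by (simp add: mE_def order_less_le)
    have Apos: "A > 0"
    proof (rule ccontr)
      assume "\<not> A > 0"
      then have "A = 0" using A_def enn2real_nonneg[of Aen] by linarith
      then have "Aen = 0" using Aen_eq by simp
      then have "AE x in M. ennreal (G x powr \<alpha>) = 0" unfolding Aen_def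
        by (subst (asm) nn_integral_0_iff_AE) auto
      then have "AE x in M. G x = 0"
        by eventually_elim (simp add: G_def)
      then have "emeasure P (space M) = 0"
        by (subst PE) (auto intro!: nn_integral_0_iff_AE[THEN iffD2] elim: AE_mp)
      moreover have "space P = space M" using sets by (rule sets_eq_imp_space_eq)
      ultimately show False using P.emeasure_space_1 by simp
    qed
    define u where "u = A powr (1/\<alpha>)"
    define v where "v = mE powr ((\<alpha>-1)/\<alpha>)"
    define c1 where "c1 = u * v / (\<alpha> * A)"
    define c2 where "c2 = u * v / ((\<alpha>/(\<alpha>-1)) * mE)"
    have upos: "u > 0" and vpos: "v > 0" using Apos mEpos by (auto simp: u_def v_def)
    have c1: "c1 \<ge> 0" and c2: "c2 \<ge> 0" using upos vpos Apos mEpos \<alpha> by (auto simp: c1_def c2_def)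
    have pw: "ennreal (G x) * indicator E x \<le> ennreal c1 * ennreal (G x powr \<alpha>) + ennreal c2 * indicator E x" for x
    proof (cases "x \<in> E")
      case True
      have "G x \<le> c1 * G x powr \<alpha> + c2"
        unfolding c1_def c2_def by (rule young_step[OF \<alpha> _ Apos mEpos u_def v_def]) (simp add: G_def)
      then show ?thesis using True c1 c2
        by (simp add: ennreal_mult'[symmetric] ennreal_plus[symmetric] del: ennreal_plus)
    qed simp
    have "emeasure P E = (\<integral>\<^sup>+ x. ennreal (G x) * indicator E x \<partial>M)" using PE[OF E] .
    also have "\<dots> \<le> (\<integral>\<^sup>+ x. ennreal c1 * ennreal (G x powr \<alpha>) + ennreal c2 * indicator E x \<partial>M)"
      by (rule nn_integral_mono) (rule pw)
    also have "\<dots> = ennreal c1 * Aen + ennreal c2 * emeasure M E"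
      using E by (simp add: nn_integral_add nn_integral_cmult Aen_def)
    also have "\<dots> = ennreal (c1 * A + c2 * mE)"
      using c1 c2 Apos mEpos by (simp add: Aen_eq mE_def M.emeasure_eq_measure ennreal_mult'[symmetric] ennreal_plus[symmetric] del: ennreal_plus)
    also have "c1 * A + c2 * mE = u * v"
      using Apos mEpos \<alpha> by (simp add: c1_def c2_def field_simps)
    finally show ?thesis by (simp add: u_def v_def A_def Aen_def G_def g_def mE_def)
  qed
qed

lemma layer_cake:
  fixes P :: "'a measure" and f :: "'a \<Rightarrow> real"
  assumes P: "prob_space P" and f[measurable]: "f \<in> borel_measurable P" and nn: "\<And>x. f x \<ge> 0"
  shows "(\<integral>\<^sup>+ x. ennreal (f x) \<partial>P) =
     (\<integral>\<^sup>+ t. indicator {0<..} t * emeasure P {x \<in> space P. t < f x} \<partial>lborel)"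
proof -
  interpret P: prob_space P by fact
  interpret PL: pair_sigma_finite P lborel
    by (intro pair_sigma_finite.intro P.sigma_finite_measure_axioms lborel.sigma_finite_measure_axioms)
  have m: "(\<lambda>(x, t). indicator {0<..<f x} t :: ennreal) \<in> borel_measurable (P \<Otimes>\<^sub>M lborel)"
    unfolding indicator_def greaterThanLessThan_iff by measurable
  have "(\<integral>\<^sup>+ x. ennreal (f x) \<partial>P) = (\<integral>\<^sup>+ x. (\<integral>\<^sup>+ t. indicator {0<..<f x} t \<partial>lborel) \<partial>P)"
    using nn by (intro nn_integral_cong) simp
  also have "\<dots> = (\<integral>\<^sup>+ t. (\<integral>\<^sup>+ x. indicator {0<..<f x} t \<partial>P) \<partial>lborel)"
    using PL.Fubini'[OF m] by simp
  also have "\<dots> = (\<integral>\<^sup>+ t. indicator {0<..} t * emeasure P {x \<in> space P. t < f x} \<partial>lborel)"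
  proof (rule nn_integral_cong)
    fix t :: real
    have "(\<integral>\<^sup>+ x. indicator {0<..<f x} t \<partial>P) = (\<integral>\<^sup>+ x. indicator {0<..} t * indicator {x \<in> space P. t < f x} x \<partial>P)"
      by (intro nn_integral_cong) (auto simp: indicator_def)
    also have "\<dots> = indicator {0<..} t * emeasure P {x \<in> space P. t < f x}"
      by (subst nn_integral_cmult) auto
    finally show "(\<integral>\<^sup>+ x. indicator {0<..<f x} t \<partial>P) = indicator {0<..} t * emeasure P {x \<in> space P. t < f x}" .
  qed
  finally show ?thesis .
qed

lemma tail_int:
  fixes h :: "real \<Rightarrow> ennreal" and a c :: real
  assumes a: "a > 0" and c: "c > 0"
    and h1: "\<And>t. t > 0 \<Longrightarrow> h t \<le> 1"
    and h2: "\<And>t. t > 0 \<Longrightarrow> h t \<le> ennreal (exp (c - a * t\<^sup>2))"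
  shows "(\<integral>\<^sup>+ t. indicator {0<..} t * h t \<partial>lborel) \<le> ennreal (sqrt (c/a) + 1/(2 * a * sqrt (c/a)))"
proof -
  define t0 where "t0 = sqrt (c/a)"
  have t0: "t0 > 0" using a c by (simp add: t0_def)
  have at0: "a * t0\<^sup>2 = c" using a c by (simp add: t0_def)
  define g where "g t = t / t0 * exp (c - a * t\<^sup>2)" for t
  define F where "F t = - exp (c - a * t\<^sup>2) / (2 * a * t0)" for t
  have pw: "indicator {0<..} t * h t \<le> indicator {0<..t0} t + ennreal (g t) * indicator {t0..} t" for t
  proof -
    consider "t \<le> 0" | "0 < t" "t \<le> t0" | "t0 < t" by linarith
    then show ?thesis
    proof cases
      case 2
      have "h t \<le> 1 + ennreal (g t)" using h1[of t] 2 by (meson add_increasing2 zero_le order_trans)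
      then show ?thesis using 2 h1[of t] by (simp add: indicator_def)
    next
      case 3
      have "exp (c - a * t\<^sup>2) \<le> g t"
        using 3 t0 by (simp add: g_def field_simps)
      then have "h t \<le> ennreal (g t)" using h2[of t] 3 t0 by (meson ennreal_leI order_trans less_trans)
      then show ?thesis using 3 t0 by (simp add: indicator_def)
    qed simp
  qed
  have deriv: "DERIV F t :> g t" for t
    unfolding F_def g_def
    using a t0 by (auto intro!: derivative_eq_intros simp: field_simps power2_eq_square)
  have lim: "(F \<longlongrightarrow> 0) at_top"
    unfolding F_def using a t0 by real_asymp
  have gm[measurable]: "g \<in> borel_measurable borel" unfolding g_def by measurable
  have "(\<integral>\<^sup>+ t. indicator {0<..} t * h t \<partial>lborel) \<le>
      (\<integral>\<^sup>+ t. indicator {0<..t0} t + ennreal (g t) * indicator {t0..} t \<partial>lborel)"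
    by (rule nn_integral_mono) (rule pw)
  also have "\<dots> = ennreal t0 + (\<integral>\<^sup>+ t. ennreal (g t) * indicator {t0..} t \<partial>lborel)"
    using t0 by (subst nn_integral_add) auto
  also have "(\<integral>\<^sup>+ t. ennreal (g t) * indicator {t0..} t \<partial>lborel) = ennreal (0 - F t0)"
    by (rule nn_integral_FTC_atLeast[OF _ deriv _ lim])
      (use t0 in \<open>auto simp: g_def intro!: divide_nonneg_pos mult_nonneg_nonneg\<close>)
  also have "0 - F t0 = 1 / (2 * a * t0)" using at0 by (simp add: F_def)
  finally show ?thesis using t0 a by (simp add: t0_def ennreal_plus[symmetric] del: ennreal_plus)
qed

lemma renyi_tail:
  fixes M P :: "'a measure" and \<alpha> d :: real
  assumes M: "prob_space M" and P: "prob_space P" and \<alpha>: "\<alpha> > 1"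
    and R: "renyi_div \<alpha> P M = ereal d" and E: "E \<in> sets M"
  shows "d \<ge> 0 \<and> emeasure P E \<le> ennreal (exp (d * ((\<alpha>-1)/\<alpha>)) * measure M E powr ((\<alpha>-1)/\<alpha>))"
proof -
  interpret M: prob_space M by fact
  interpret P: prob_space P by fact
  define Aen where "Aen = (\<integral>\<^sup>+ x. ennreal (enn2real (RN_deriv M P x) powr \<alpha>) \<partial>M)"
  define A where "A = enn2real Aen"
  have c: "sets P = sets M" "absolutely_continuous M P" "Aen \<noteq> \<top>" and dA: "d = ln A / (\<alpha> - 1)"
  proof -
    have ne: "renyi_div \<alpha> P M \<noteq> \<infinity>" using R by simp
    show c1: "sets P = sets M" "absolutely_continuous M P"
      using ne unfolding renyi_div_def by (auto split: if_split_asm)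
    then have r: "renyi_div \<alpha> P M = (if Aen = \<top> then \<infinity> else ereal (ln (enn2real Aen) / (\<alpha> - 1)))"
      unfolding renyi_div_def Aen_def Let_def by simp
    show "Aen \<noteq> \<top>" using ne r by (auto split: if_split_asm)
    then show "d = ln A / (\<alpha> - 1)" using R r by (simp add: A_def)
  qed
  have core: "emeasure P F \<le> ennreal (A powr (1/\<alpha>) * measure M F powr ((\<alpha>-1)/\<alpha>))" if "F \<in> sets M" for F
    using holder_core[OF M P c(1) c(2) \<alpha> _ that] c(3) unfolding A_def Aen_def by simp
  have sp: "space P = space M" using c(1) by (rule sets_eq_imp_space_eq)
  have "1 \<le> ennreal (A powr (1/\<alpha>))"
    using core[OF sets.top] P.emeasure_space_1 sp by (simp add: M.prob_space)
  then have A1p: "1 \<le> A powr (1/\<alpha>)" by (simp only: ennreal_ge_1)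
  have Apos: "A > 0"
  proof (rule ccontr)
    assume "\<not> A > 0" then have "A = 0" using A_def enn2real_nonneg[of Aen] by linarith
    then show False using A1p by simp
  qed
  have A1: "1 \<le> A"
  proof (rule ccontr)
    assume "\<not> 1 \<le> A"
    then have "A powr (1/\<alpha>) < 1 powr (1/\<alpha>)" using Apos \<alpha> by (intro powr_less_mono2) auto
    then show False using A1p by simp
  qed
  have ex: "exp (d * ((\<alpha>-1)/\<alpha>)) = A powr (1/\<alpha>)"
    using Apos \<alpha> by (simp add: dA powr_def)
  have "d \<ge> 0" using A1 \<alpha> by (simp add: dA)
  then show ?thesis using core[OF E] ex by simp
qed

lemma renyi_not_minf: "renyi_div \<alpha> P M \<noteq> -\<infinity>"
  unfolding renyi_div_def Let_def by simp

lemma final_arith: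
  fixes c k :: real assumes c: "c > 0" and k: "k > 0"
  shows "sqrt (c / (1/k)) + 1 / (2 * (1/k) * sqrt (c / (1/k))) = sqrt k * (sqrt c + 1 / (2 * sqrt c))"
proof -
  have "sqrt (c / (1/k)) = sqrt c * sqrt k" by (simp add: real_sqrt_mult)
  moreover have "k = sqrt k * sqrt k" using k by simp
  ultimately show ?thesis using c k
    by (simp add: field_simps)
qed



theorem theorem2:
  fixes D :: "'z measure" and H :: "'h measure" and n :: nat
    and K :: "(nat \<Rightarrow> 'z) \<Rightarrow> 'h measure"
    and loss :: "'h \<Rightarrow> 'z \<Rightarrow> real" and \<sigma> \<alpha> I :: real
    and PS :: "(nat \<Rightarrow> 'z) measure" and PSH :: "((nat \<Rightarrow> 'z) \<times> 'h) measure"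
    and PH :: "'h measure"
    and LS :: "(nat \<Rightarrow> 'z) \<Rightarrow> 'h \<Rightarrow> real" and LD :: "'h \<Rightarrow> real" and \<gamma> :: real
  defines "PS \<equiv> PiM {..<n} (\<lambda>_. D)"
    and "PSH \<equiv> PS \<bind> (\<lambda>s. distr (K s) (PS \<Otimes>\<^sub>M H) (\<lambda>h. (s, h)))"
    and "PH \<equiv> distr PSH H snd"
    and "LS \<equiv> (\<lambda>s h. (\<Sum>i<n. loss h (s i)) / real n)"
    and "LD \<equiv> (\<lambda>h. \<integral>z. loss h z \<partial>D)"
    and "\<gamma> \<equiv> \<alpha> / (\<alpha> - 1)"
  assumes D: "prob_space D"
    and n: "n \<ge> 1"
    and K: "K \<in> PS \<rightarrow>\<^sub>M prob_algebra H"
    and ac: "absolutely_continuous (PS \<Otimes>\<^sub>M PH) PSH"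
    and loss_meas: "(\<lambda>(h, z). loss h z) \<in> borel_measurable (H \<Otimes>\<^sub>M D)"
    and loss_int: "\<forall>h\<in>space H. integrable D (loss h)"
    and \<sigma>: "\<sigma> > 0"
    and conc: "\<forall>h\<in>space H. \<forall>\<eta>>0.
        measure PS {s \<in> space PS. \<bar>LS s h - LD h\<bar> > \<eta>}
          \<le> 2 * exp (- (\<eta>\<^sup>2 / (2 * \<sigma>\<^sup>2)) * real n)"
    and \<alpha>: "\<alpha> > 1"
    and I: "sibson_mi \<alpha> PSH PS H = ereal I"
  shows "(\<integral>\<^sup>+ p. ennreal \<bar>LS (fst p) (snd p) - LD (snd p)\<bar> \<partial>PSH)
    \<le> ennreal (sqrt (2 * \<sigma>\<^sup>2 * \<gamma> / real n) *
          (sqrt ((ln 2 + I) / \<gamma>) + 1 / (2 * sqrt ((ln 2 + I) / \<gamma>))))"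
proof -
  interpret D: prob_space D by (rule D)
  have PSp: "prob_space PS" unfolding PS_def by (intro prob_space_PiM D)
  interpret PS: prob_space PS by (rule PSp)
  have Hne: "space H \<noteq> {}"
  proof -
    obtain s where s: "s \<in> space PS" using PS.not_empty by blast
    have "K s \<in> space (prob_algebra H)" using measurable_space[OF K s] .
    then have "prob_space (K s)" "sets (K s) = sets H" by (auto simp: space_prob_algebra)
    then show ?thesis using prob_space.not_empty sets_eq_imp_space_eq by metis
  qed
  have Km[measurable]: "K \<in> PS \<rightarrow>\<^sub>M prob_algebra H" by (rule K)
  have kap: "(\<lambda>s. distr (K s) (PS \<Otimes>\<^sub>M H) (\<lambda>h. (s, h))) \<in> PS \<rightarrow>\<^sub>M prob_algebra (PS \<Otimes>\<^sub>M H)"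
    by (rule measurable_distr_prob_space2[OF K]) simp
  have PSa: "PS \<in> space (prob_algebra PS)" using PSp by (simp add: space_prob_algebra)
  have PSHp: "prob_space PSH" unfolding PSH_def by (rule prob_space_bind'[OF PSa kap])
  have PSHs: "sets PSH = sets (PS \<Otimes>\<^sub>M H)" unfolding PSH_def by (rule sets_bind'[OF PSa kap])
  interpret PSH: prob_space PSH by (rule PSHp)
  have PSHsp: "space PSH = space (PS \<Otimes>\<^sub>M H)" using PSHs by (rule sets_eq_imp_space_eq)
  have lm[measurable]: "(\<lambda>(h, z). loss h z) \<in> borel_measurable (H \<Otimes>\<^sub>M D)" by (rule loss_meas)
  have LSm[measurable]: "(\<lambda>p. LS (fst p) (snd p)) \<in> borel_measurable (PS \<Otimes>\<^sub>M H)"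
  proof -
    have "(\<lambda>p. loss (snd p) (fst p i)) \<in> borel_measurable (PS \<Otimes>\<^sub>M H)" if i: "i < n" for i
    proof -
      have "(\<lambda>p. (snd p, fst p i)) \<in> (PS \<Otimes>\<^sub>M H) \<rightarrow>\<^sub>M (H \<Otimes>\<^sub>M D)"
        unfolding PS_def using i
        by (intro measurable_Pair measurable_snd measurable_compose[OF measurable_fst measurable_component_singleton]) auto
      from measurable_comp[OF this lm] show ?thesis by (simp add: comp_def)
    qed
    then show ?thesis unfolding LS_def by measurable
  qed
  have LDm[measurable]: "LD \<in> borel_measurable H"
    unfolding LD_def by (rule D.borel_measurable_lebesgue_integral) (simp add: lm)
  define X where "X p = \<bar>LS (fst p) (snd p) - LD (snd p)\<bar>" for p
  have Xm[measurable]: "X \<in> borel_measurable (PS \<Otimes>\<^sub>M H)" unfolding X_def by measurable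
  have XmP[measurable]: "X \<in> borel_measurable PSH" using Xm by (simp add: measurable_cong_sets[OF PSHs refl])
  have \<gamma>pos: "\<gamma> > 1" using \<alpha> by (simp add: \<gamma>_def field_simps)
  have \<gamma>inv: "(\<alpha>-1)/\<alpha> = 1/\<gamma>" using \<alpha> by (simp add: \<gamma>_def)
  define a where "a = real n / (2 * \<sigma>\<^sup>2 * \<gamma>)"
  have apos: "a > 0" using n \<sigma> \<gamma>pos by (simp add: a_def)
  have Qb: "emeasure PSH {p \<in> space PSH. t < X p} \<le> ennreal (exp ((d + ln 2)/\<gamma> - a * t\<^sup>2))"
    if Q: "prob_space Q" "sets Q = sets H" and R: "renyi_div \<alpha> PSH (PS \<Otimes>\<^sub>M Q) = ereal d" and t: "t > 0"
    for Q d t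
  proof -
    interpret Q: prob_space Q by (rule Q(1))
    interpret PQ: pair_sigma_finite PS Q
      by (intro pair_sigma_finite.intro PS.sigma_finite_measure_axioms Q.sigma_finite_measure_axioms)
    interpret PQp: prob_space "PS \<Otimes>\<^sub>M Q" by (rule prob_space_pair[OF PSp Q(1)])
    have Msets: "sets (PS \<Otimes>\<^sub>M Q) = sets (PS \<Otimes>\<^sub>M H)" by (rule sets_pair_measure_cong) (simp_all add: Q)
    have Msp: "space (PS \<Otimes>\<^sub>M Q) = space (PS \<Otimes>\<^sub>M H)" using Msets by (rule sets_eq_imp_space_eq)
    have QH: "space Q = space H" using Q(2) by (rule sets_eq_imp_space_eq)
    have XmQ[measurable]: "X \<in> borel_measurable (PS \<Otimes>\<^sub>M Q)" using Xm by (simp add: measurable_cong_sets[OF Msets refl])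
    define E where "E = {p \<in> space (PS \<Otimes>\<^sub>M Q). t < X p}"
    have Es: "E \<in> sets (PS \<Otimes>\<^sub>M Q)" unfolding E_def by measurable
    have EPSH: "{p \<in> space PSH. t < X p} = E" by (simp add: E_def PSHsp Msp)
    define B where "B = 2 * exp (- (t\<^sup>2 / (2 * \<sigma>\<^sup>2)) * real n)"
    have Bpos: "B > 0" by (simp add: B_def)
    have rt: "d \<ge> 0 \<and> emeasure PSH E \<le> ennreal (exp (d * ((\<alpha>-1)/\<alpha>)) * measure (PS \<Otimes>\<^sub>M Q) E powr ((\<alpha>-1)/\<alpha>))"
      by (rule renyi_tail[OF prob_space_pair[OF PSp Q(1)] PSHp \<alpha> R Es])
    have "emeasure (PS \<Otimes>\<^sub>M Q) E = (\<integral>\<^sup>+h. emeasure PS ((\<lambda>s. (s, h)) -` E) \<partial>Q)"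
      by (rule PQ.emeasure_pair_measure_alt2[OF Es])
    also have "\<dots> \<le> (\<integral>\<^sup>+h. ennreal B \<partial>Q)"
    proof (rule nn_integral_mono)
      fix h assume h: "h \<in> space Q"
      have "(\<lambda>s. (s, h)) -` E = {s \<in> space PS. \<bar>LS s h - LD h\<bar> > t}"
        using h by (auto simp: E_def X_def space_pair_measure)
      then have "emeasure PS ((\<lambda>s. (s, h)) -` E) = ennreal (measure PS {s \<in> space PS. \<bar>LS s h - LD h\<bar> > t})"
        by (simp add: PS.emeasure_eq_measure)
      also have "\<dots> \<le> ennreal B" unfolding B_def
        using conc h t QH by (intro ennreal_leI) auto
      finally show "emeasure PS ((\<lambda>s. (s, h)) -` E) \<le> ennreal B" .
    qed
    also have "\<dots> = ennreal B" by (simp add: Q.emeasure_space_1)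
    finally have "ennreal (measure (PS \<Otimes>\<^sub>M Q) E) \<le> ennreal B" by (simp add: PQp.emeasure_eq_measure)
    then have mE: "measure (PS \<Otimes>\<^sub>M Q) E \<le> B" using Bpos by (simp add: ennreal_le_iff)
    have "exp (d * ((\<alpha>-1)/\<alpha>)) * measure (PS \<Otimes>\<^sub>M Q) E powr ((\<alpha>-1)/\<alpha>) \<le> exp (d / \<gamma>) * B powr (1/\<gamma>)"
      unfolding \<gamma>inv using mE \<gamma>pos by (auto intro!: mult_left_mono powr_mono2)
    also have "\<dots> = exp ((d + ln 2)/\<gamma> - a * t\<^sup>2)"
      using Bpos \<gamma>pos \<sigma> unfolding powr_def B_def a_def
      by (simp add: ln_mult exp_add[symmetric] field_simps)
    finally show ?thesis using rt EPSH by (metis ennreal_leI order_trans)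
  qed
  have I0: "I \<ge> 0"
  proof -
    have "ereal 0 \<le> sibson_mi \<alpha> PSH PS H" unfolding sibson_mi_def
    proof (rule INF_greatest)
      fix Q assume "Q \<in> {Q. prob_space Q \<and> sets Q = sets H}"
      then have Q: "prob_space Q" by simp
      show "ereal 0 \<le> renyi_div \<alpha> PSH (PS \<Otimes>\<^sub>M Q)"
      proof (cases "renyi_div \<alpha> PSH (PS \<Otimes>\<^sub>M Q)")
        case (real d)
        then show ?thesis using renyi_tail[OF prob_space_pair[OF PSp Q] PSHp \<alpha> real sets.top] by simp
      next
        case MInf then show ?thesis using renyi_not_minf by blast
      qed simp
    qed
    then show ?thesis using I by simp
  qed
  define c where "c = (ln 2 + I) / \<gamma>"
  have cpos: "c > 0" using I0 \<gamma>pos by (simp add: c_def add_pos_nonneg)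
  have h2: "emeasure PSH {p \<in> space PSH. t < X p} \<le> ennreal (exp (c - a * t\<^sup>2))" if t: "t > 0" for t
  proof (rule ennreal_le_epsilon)
    fix e :: real assume e: "e > 0"
    define b where "b = c - a * t\<^sup>2"
    define \<delta> where "\<delta> = ln (1 + e / exp b)"
    have \<delta>: "\<delta> > 0" unfolding \<delta>_def using e by (intro ln_gt_zero) simp
    have "sibson_mi \<alpha> PSH PS H < ereal (I + \<gamma> * \<delta>)" using I \<delta> \<gamma>pos by simp
    then obtain Q where Q: "prob_space Q" "sets Q = sets H"
      and RQ: "renyi_div \<alpha> PSH (PS \<Otimes>\<^sub>M Q) < ereal (I + \<gamma> * \<delta>)"
      unfolding sibson_mi_def INF_less_iff by blast
    obtain d where d: "renyi_div \<alpha> PSH (PS \<Otimes>\<^sub>M Q) = ereal d"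
      using RQ renyi_not_minf by (cases "renyi_div \<alpha> PSH (PS \<Otimes>\<^sub>M Q)") auto
    have dlt: "d < I + \<gamma> * \<delta>" using RQ d by simp
    have "emeasure PSH {p \<in> space PSH. t < X p} \<le> ennreal (exp ((d + ln 2)/\<gamma> - a * t\<^sup>2))"
      by (rule Qb[OF Q d t])
    also have "exp ((d + ln 2)/\<gamma> - a * t\<^sup>2) \<le> exp (b + \<delta>)"
    proof -
      have "d/\<gamma> < I/\<gamma> + \<delta>" using dlt \<gamma>pos by (simp add: field_simps)
      then show ?thesis by (simp add: b_def c_def add_divide_distrib)
    qed
    also have "exp (b + \<delta>) = exp b + e"
      unfolding exp_add \<delta>_def using e by (simp add: add_pos_nonneg field_simps)
    finally have fin: "emeasure PSH {p \<in> space PSH. t < X p} \<le> ennreal (exp b + e)"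
      by (simp add: ennreal_leI)
    show "emeasure PSH {p \<in> space PSH. t < X p} \<le> ennreal (exp (c - a * t\<^sup>2)) + ennreal e"
      using fin e by (simp add: b_def ennreal_plus[symmetric] del: ennreal_plus)
  qed
  have "(\<integral>\<^sup>+ p. ennreal \<bar>LS (fst p) (snd p) - LD (snd p)\<bar> \<partial>PSH) = (\<integral>\<^sup>+ p. ennreal (X p) \<partial>PSH)"
    by (simp add: X_def)
  also have "\<dots> = (\<integral>\<^sup>+ t. indicator {0<..} t * emeasure PSH {p \<in> space PSH. t < X p} \<partial>lborel)"
    by (rule layer_cake[OF PSHp XmP]) (simp add: X_def)
  also have "\<dots> \<le> ennreal (sqrt (c/a) + 1/(2 * a * sqrt (c/a)))"
    by (rule tail_int[OF apos cpos PSH.emeasure_le_1 h2])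
  also have "sqrt (c/a) + 1/(2 * a * sqrt (c/a)) = sqrt (2 * \<sigma>\<^sup>2 * \<gamma> / real n) *
          (sqrt ((ln 2 + I) / \<gamma>) + 1 / (2 * sqrt ((ln 2 + I) / \<gamma>)))"
  proof -
    have k: "2 * \<sigma>\<^sup>2 * \<gamma> / real n > 0" using n \<sigma> \<gamma>pos by simp
    have "a = 1 / (2 * \<sigma>\<^sup>2 * \<gamma> / real n)" by (simp add: a_def)
    then show ?thesis using final_arith[OF cpos k] by (simp add: c_def)
  qed
  finally show ?thesis .
qed

end
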